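(* Let $\mathcal{B}$ be a base, $P=\{p_1,\dots,p_n\}$ and $S$ atomic multisets, and $q$ an atom. The following are equivalent: (1) $P,S\vdash_{\mathcal{B}}q$; (2) for every base $\mathcal{C}\supseteq\mathcal{B}$ and all atomic multisets $T_1,\dots,T_n$ with $T_i\vdash_{\mathcal{C}}p_i$ for each $i=1,\dots,n$, we have $T_1,\dots,T_n,S\vdash_{\mathcal{C}}q$.
   Context: Fix a set $\mathbb{A}$ of atoms; atomic multisets are finite multisets of atoms, "$P,Q$" denotes multiset union. An atomic sequent is $P\Rightarrow p$ with $P$ an atomic multiset, $p$ an atom. An atomic box is a multiset of atomic sequents. An atomic rule is a triple $\langle\mathbf{A},\mathbf{S},p\rangle$ with $\mathbf{A}$ a multiset of atomic boxes, $\mathbf{S}$ an atomic box, $p$ an atom. A base is a set of atomic rules. An atom $p$ is persistent in $\mathcal{B}$ if some $\langle\varnothing,\mathbf{S},p\rangle\in\mathcal{B}$ has $\mathbf{S}\neq\varnothing$. Derivability $\vdash_{\mathcal{B}}$ is defined inductively: (Ref) $p\vdash_{\mathcal{B}}p$; (App) if $\langle\mathbf{A},\mathbf{S},p\rangle\in\mathcal{B}$ with $\mathbf{A}=\{\mathbf{T}_1,\dots,\mathbf{T}_m\}$, and there are atomic multisets $C_1,\dots,C_n$ ($n\ge m$) and a multiset $D=\{d_{m+1},\dots,d_n\}$ of atoms persistent in $\mathcal{B}$ such that $C_i,Q\vdash_{\mathcal{B}}q$ for every $i\le m$ and every $Q\Rightarrow q\in\mathbf{T}_i$, $C_j\vdash_{\mathcal{B}}d_j$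 for every $m<j\le n$, and $D,U\vdash_{\mathcal{B}}v$ for every $U\Rightarrow v\in\mathbf{S}$, then $C_1,\dots,C_n\vdash_{\mathcal{B}}p$. *)

theory Defs
  imports "HOL-Library.Multiset"
begin

type_synonym 'a aseq = "'a multiset \<times> 'a"
type_synonym 'a abox = "'a aseq multiset"
type_synonym 'a arule = "'a abox multiset \<times> 'a abox \<times> 'a"
type_synonym 'a base = "'a arule set"

definition persistent :: "'a base \<Rightarrow> 'a \<Rightarrow> bool" where
  "persistent B p \<longleftrightarrow> (\<exists>S. ({#}, S, p) \<in> B \<and> S \<noteq> {#})"

text \<open>derives B P p means P |-_B p. In (App), the boxes T_1..T_m are listed as Ts,
  the multisets C_1..C_n as Cs (n = length Cs >= m), and the atoms d_(m+1)..d_n as ds.\<close>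

inductive derives :: "'a base \<Rightarrow> 'a multiset \<Rightarrow> 'a \<Rightarrow> bool" for B :: "'a base" where
  Ref: "derives B {#p#} p"
| App: "\<lbrakk> (A, S, p) \<in> B;
          mset Ts = A;
          length Ts \<le> length Cs;
          length ds = length Cs - length Ts;
          \<forall>i < length Ts. \<forall>Qq \<in># Ts ! i. derives B (Cs ! i + fst Qq) (snd Qq);
          \<forall>j < length ds. persistent B (ds ! j) \<and> derives B (Cs ! (length Ts + j)) (ds ! j);
          \<forall>Uv \<in># S. derives B (mset ds + fst Uv) (snd Uv) \<rbrakk>
        \<Longrightarrow> derives B (sum_list Cs) p"

end

theory Submission
  imports Defs
begin

lemma persistent_mono: "persistent B p \<Longrightarrow> B \<subseteq> C \<Longrightarrow> persistent C p"
  unfolding persistent_def by blast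

lemma derives_mono:
  assumes "derives B P p" "B \<subseteq> C" shows "derives C P p"
  using assms(1)
proof (induction rule: derives.induct)
  case (Ref p) then show ?case by (rule derives.Ref)
next
  case (App A S p Ts Cs ds)
  show ?case
  proof (rule derives.App[of A S p C Ts Cs ds])
    show "(A, S, p) \<in> C" using App.hyps(1) assms(2) by blast
    show "mset Ts = A" "length Ts \<le> length Cs" "length ds = length Cs - length Ts"
      using App.hyps by auto
    show "\<forall>i<length Ts. \<forall>Qq\<in>#Ts ! i. derives C (Cs ! i + fst Qq) (snd Qq)"
      using App.IH(1) by simp
    show "\<forall>j<length ds. persistent C (ds ! j) \<and> derives C (Cs ! (length Ts + j)) (ds ! j)"
      using App.IH(2) persistent_mono[OF _ assms(2)] by blast
    show "\<forall>Uv\<in>#S. derives C (mset ds + fst Uv) (snd Uv)"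
      using App.IH(3) by simp
  qed
qed
lemma mem_sum_list: "p \<in># sum_list Cs \<Longrightarrow> \<exists>k<length Cs. p \<in># Cs ! k"
proof (induction Cs)
  case Nil then show ?case by simp
next
  case (Cons c Cs)
  then show ?case
    by (metis Suc_mono length_Cons nth_Cons_0 nth_Cons_Suc sum_list.Cons union_iff zero_less_Suc)
qed

lemma sum_list_upd: "k < length xs \<Longrightarrow> sum_list (xs[k := y]) + xs ! k = sum_list xs + (y :: 'a multiset)"
proof (induction xs arbitrary: k)
  case Nil then show ?case by simp
next
  case (Cons x xs)
  then show ?case by (cases k) (auto simp: ac_simps)
qed

lemma cut_gen:
  assumes T: "derives C T p"
  shows "derives C D q \<Longrightarrow> (\<forall>G. D = add_mset p G \<longrightarrow> derives C (T + G) q)"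
proof (induction rule: derives.induct)
  case (Ref r)
  show ?case
  proof (intro allI impI)
    fix G assume "{#r#} = add_mset p G"
    then have "r = p \<and> G = {#}" by (simp only: single_eq_add_mset)
    then have "r = p" "G = {#}" by auto
    then show "derives C (T + G) r" using T by simp
  qed
next
  case (App A S r Ts Cs ds)
  show ?case
  proof (intro allI impI)
    fix G assume G: "sum_list Cs = add_mset p G"
    have "p \<in># sum_list Cs" using G by simp
    from mem_sum_list[OF this] obtain k where k: "k < length Cs" "p \<in># Cs ! k" by blast
    define Cs' where "Cs' = Cs[k := T + (Cs ! k - {#p#})]"
    have len: "length Cs' = length Cs" by (simp add: Cs'_def)
    have "sum_list Cs' + Cs ! k = sum_list Cs + (T + (Cs ! k - {#p#}))"
      unfolding Cs'_def by (rule sum_list_upd[OF k(1)])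
    also have "\<dots> = add_mset p G + T + (Cs ! k - {#p#})" using G by (simp add: ac_simps)
    also have "\<dots> = (T + G) + Cs ! k" using k(2)
      by (simp add: ac_simps)
    finally have sum: "sum_list Cs' = T + G" by simp
    have nth': "Cs' ! i = (if i = k then T + (Cs ! k - {#p#}) else Cs ! i)" if "i < length Cs" for i
      using that k by (simp add: Cs'_def)
    have "derives C (sum_list Cs') r"
    proof (rule derives.App[of A S r C Ts Cs' ds])
      show "(A, S, r) \<in> C" "mset Ts = A" "length Ts \<le> length Cs'"
        "length ds = length Cs' - length Ts"
        using App.hyps len by auto
      show "\<forall>i<length Ts. \<forall>Qq\<in>#Ts ! i. derives C (Cs' ! i + fst Qq) (snd Qq)"
      proof (intro allI impI ballI)
        fix i Qq assume i: "i < length Ts" and Qq: "Qq \<in># Ts ! i"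
        have il: "i < length Cs" using i App.hyps by simp
        note IH0 = App.IH(1)[rule_format, OF i Qq]
        have IH: "derives C (Cs ! i + fst Qq) (snd Qq)"
          "\<forall>G. Cs ! i + fst Qq = add_mset p G \<longrightarrow> derives C (T + G) (snd Qq)"
          using IH0 by auto
        show "derives C (Cs' ! i + fst Qq) (snd Qq)"
        proof (cases "i = k")
          case True
          have "Cs ! i + fst Qq = add_mset p (Cs ! k - {#p#} + fst Qq)"
            using True k(2) by simp
          then have "derives C (T + (Cs ! k - {#p#} + fst Qq)) (snd Qq)" using IH(2) by blast
          then show ?thesis using True nth'[OF il] by (simp add: ac_simps)
        next
          case False then show ?thesis using IH(1) nth'[OF il] by simp
        qed
      qed
      show "\<forall>j<length ds. persistent C (ds ! j) \<and> derives C (Cs' ! (length Ts + j)) (ds ! j)"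
      proof (intro allI impI conjI)
        fix j assume j: "j < length ds"
        have il: "length Ts + j < length Cs" using j App.hyps by simp
        have IH: "persistent C (ds ! j)" "derives C (Cs ! (length Ts + j)) (ds ! j)"
          "\<forall>G. Cs ! (length Ts + j) = add_mset p G \<longrightarrow> derives C (T + G) (ds ! j)"
          using App.IH(2)[rule_format, OF j] by auto
        show "persistent C (ds ! j)" by (rule IH(1))
        show "derives C (Cs' ! (length Ts + j)) (ds ! j)"
        proof (cases "length Ts + j = k")
          case True
          have "Cs ! (length Ts + j) = add_mset p (Cs ! k - {#p#})" using True k(2) by simp
          then have "derives C (T + (Cs ! k - {#p#})) (ds ! j)" using IH(3) by blast
          then show ?thesis using True nth'[OF il] by simp
        next
          case False then show ?thesis using IH(2) nth'[OF il] by simp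
        qed
      qed
      show "\<forall>Uv\<in>#S. derives C (mset ds + fst Uv) (snd Uv)" using App.IH(3) by simp
    qed
    then show "derives C (T + G) r" using sum by simp
  qed
qed

lemma cut: "derives C (add_mset p G) q \<Longrightarrow> derives C T p \<Longrightarrow> derives C (T + G) q"
  using cut_gen[of C T p "add_mset p G" q] by simp

lemma multi_cut:
  "derives C (mset ps + S) q \<Longrightarrow> length Ts = length ps \<Longrightarrow>
   (\<forall>i < length ps. derives C (Ts ! i) (ps ! i)) \<Longrightarrow> derives C (sum_list Ts + S) q"
proof (induction ps arbitrary: S Ts)
  case Nil then show ?case by simp
next
  case (Cons p ps)
  from Cons.prems(2) obtain T Ts' where Ts: "Ts = T # Ts'" by (cases Ts) auto
  have l: "length Ts' = length ps" using Cons.prems(2) Ts by simp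
  have d1: "derives C (mset ps + add_mset p S) q" using Cons.prems(1) by simp
  have d2: "\<forall>i < length ps. derives C (Ts' ! i) (ps ! i)"
  proof (intro allI impI)
    fix i assume "i < length ps"
    then have "Suc i < length (p # ps)" by simp
    then have "derives C (Ts ! Suc i) ((p # ps) ! Suc i)" using Cons.prems(3) by blast
    then show "derives C (Ts' ! i) (ps ! i)" using Ts by simp
  qed
  have "derives C (sum_list Ts' + add_mset p S) q"
    by (rule Cons.IH[OF d1 l d2])
  then have "derives C (add_mset p (sum_list Ts' + S)) q" by simp
  moreover have "derives C T p"
  proof -
    have "derives C (Ts ! 0) ((p # ps) ! 0)" using Cons.prems(3) by blast
    then show ?thesis using Ts by simp
  qed
  ultimately have "derives C (T + (sum_list Ts' + S)) q" by (rule cut)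
  then show ?case using Ts by (simp add: ac_simps)
qed

lemma sum_list_singletons: "sum_list (map (\<lambda>p. {#p#}) ps) = mset ps"
  by (induction ps) auto

theorem lemma1:
  fixes B :: "'a base" and ps :: "'a list" and S :: "'a multiset" and q :: 'a
  shows "derives B (mset ps + S) q \<longleftrightarrow>
    (\<forall>C. B \<subseteq> C \<longrightarrow>
      (\<forall>Ts :: 'a multiset list. length Ts = length ps \<longrightarrow>
         (\<forall>i < length ps. derives C (Ts ! i) (ps ! i)) \<longrightarrow>
         derives C (sum_list Ts + S) q))"
proof
  assume d: "derives B (mset ps + S) q"
  show "\<forall>C. B \<subseteq> C \<longrightarrow>
      (\<forall>Ts :: 'a multiset list. length Ts = length ps \<longrightarrow>
         (\<forall>i < length ps. derives C (Ts ! i) (ps ! i)) \<longrightarrow>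
         derives C (sum_list Ts + S) q)"
  proof (intro allI impI)
    fix C Ts assume BC: "B \<subseteq> C" and l: "length Ts = length ps"
      and h: "\<forall>i < length ps. derives C (Ts ! i) (ps ! i)"
    show "derives C (sum_list Ts + S) q"
      by (rule multi_cut[OF derives_mono[OF d BC] l h])
  qed
next
  assume H: "\<forall>C. B \<subseteq> C \<longrightarrow>
      (\<forall>Ts :: 'a multiset list. length Ts = length ps \<longrightarrow>
         (\<forall>i < length ps. derives C (Ts ! i) (ps ! i)) \<longrightarrow>
         derives C (sum_list Ts + S) q)"
  have "\<forall>i < length ps. derives B (map (\<lambda>p. {#p#}) ps ! i) (ps ! i)"
    by (simp add: derives.Ref)
  moreover have "length (map (\<lambda>p. {#p#}) ps) = length ps" by simp
  ultimately have "derives B (sum_list (map (\<lambda>p. {#p#}) ps) + S) q"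
    using H[rule_format, OF order_refl] by blast
  then show "derives B (mset ps + S) q" by (simp add: sum_list_singletons)
qed

end
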